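(* Fix an integer $k\ge1$ and $p\in(0,1)$. For an integer $K=K(n)\le n-k$ define \[ T^K_{k+1}=\sum_{s\in C_{k+1},\ \min(s)\le K}\prod_{i\ne j\in s}Y_{i,j}\Bigl[\prod_{i=1}^{\min(s)-1}\Bigl(1-\prod_{j\in s}Y_{i,j}\Bigr)-\prod_{i=1}^{\min(s)-1}\Bigl(1-\prod_{j\in s_-}Y_{i,j}\Bigr)\Bigr]. \] If there is $\epsilon>0$ with $K(n)/\ln^{1+\epsilon}(n)\to\infty$ as $n\to\infty$, then $\mathbb{P}(T_{k+1}-T^K_{k+1}\ne0)\to0$ as $n\to\infty$.
   Context: $G(n,p)$ is the random graph on $[n]$ where each of the $\binom n2$ edges is present independently with probability $p$; $Y_{i,j}=Y_{j,i}$ is the indicator of edge $\{i,j\}$. $C_{k+1}$ is the set of $(k+1)$-element subsets of $[n]$, $s_-=s\setminus\{\min s\}$, and \[ T_{k+1}=\sum_{s\in C_{k+1}}\prod_{i\ne j\in s}Y_{i,j}\Bigl[\prod_{i=1}^{\min(s)-1}\Bigl(1-\prod_{j\in s}Y_{i,j}\Bigr)-\prod_{i=1}^{\min(s)-1}\Bigl(1-\prod_{j\in s_-}Y_{i,j}\Bigr)\Bigr], \] which is the number of $k$-simplices of the clique complex $X(n,p)$ of $G$ that are critical for the lexicographical matching (pairing each simplex $s$ having some $j<\min s$ with $s\cup\{j\}$ a simplex to $s\cup\{j_0\}$, $j_0$ the least such $j$). *)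

theory Defs
  imports "HOL-Probability.Probability"
begin

definition edges_Kn :: "nat \<Rightarrow> nat set set" where
  "edges_Kn n = {e. \<exists>i\<in>{1..n}. \<exists>j\<in>{1..n}. i \<noteq> j \<and> e = {i, j}}"

text \<open>The random graph G(n,p): each edge present independently with probability p.
  A graph is represented by its edge-indicator function on 2-element sets.\<close>
definition Gnp :: "nat \<Rightarrow> real \<Rightarrow> (nat set \<Rightarrow> bool) pmf" where
  "Gnp n p = Pi_pmf (edges_Kn n) False (\<lambda>_. bernoulli_pmf p)"

definition Y :: "(nat set \<Rightarrow> bool) \<Rightarrow> nat \<Rightarrow> nat \<Rightarrow> int" where
  "Y G i j = (if G {i, j} then 1 else 0)"

definition C :: "nat \<Rightarrow> nat \<Rightarrow> nat set set" where
  "C n m = {s. s \<subseteq> {1..n} \<and> card s = m}"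

definition crit_term :: "(nat set \<Rightarrow> bool) \<Rightarrow> nat set \<Rightarrow> int" where
  "crit_term G s =
     (\<Prod>i\<in>s. \<Prod>j\<in>s - {i}. Y G i j) *
     ((\<Prod>i\<in>{1..<Min s}. (1 - (\<Prod>j\<in>s. Y G i j)))
      - (\<Prod>i\<in>{1..<Min s}. (1 - (\<Prod>j\<in>s - {Min s}. Y G i j))))"

definition T :: "nat \<Rightarrow> nat \<Rightarrow> (nat set \<Rightarrow> bool) \<Rightarrow> int" where
  "T n k G = (\<Sum>s\<in>C n (k+1). crit_term G s)"

definition TK :: "nat \<Rightarrow> nat \<Rightarrow> int \<Rightarrow> (nat set \<Rightarrow> bool) \<Rightarrow> int" where
  "TK n k K G = (\<Sum>s\<in>{s\<in>C n (k+1). int (Min s) \<le> K}. crit_term G s)"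

end

theory Submission imports Defs begin
lemma prob_pair_pmf_times:
  "measure_pmf.prob (pair_pmf M N) (A \<times> B) = measure_pmf.prob M A * measure_pmf.prob N B"
proof -
  have "measure_pmf.prob (pair_pmf M N) (A \<times> B) = measure_pmf.prob (pair_pmf M N) ((A \<inter> set_pmf M) \<times> (B \<inter> set_pmf N))"
    by (rule measure_prob_cong_0) (auto simp: set_pmf_eq pmf_pair)
  also have "\<dots> = measure_pmf.prob M (A \<inter> set_pmf M) * measure_pmf.prob N (B \<inter> set_pmf N)"
    by (rule measure_pmf_prob_product) (auto intro: countable_subset)
  also have "\<dots> = measure_pmf.prob M A * measure_pmf.prob N B"
    by (simp add: measure_Int_set_pmf)
  finally show ?thesis .
qed

lemma indep_split:
  assumes fin: "finite E" and sub: "A \<subseteq> E"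
    and P: "\<And>f g. (\<And>x. x \<in> A \<Longrightarrow> f x = g x) \<Longrightarrow> P f = P g"
    and Q: "\<And>f g. (\<And>x. x \<in> E - A \<Longrightarrow> f x = g x) \<Longrightarrow> Q f = Q g"
  shows "measure_pmf.prob (Pi_pmf E d q) {f. P f \<and> Q f} =
         measure_pmf.prob (Pi_pmf A d q) {f. P f} * measure_pmf.prob (Pi_pmf (E - A) d q) {f. Q f}"
proof -
  have finA: "finite A" using fin sub finite_subset by blast
  have E: "E = A \<union> (E - A)" using sub by blast
  let ?h = "\<lambda>(f,g) x. if x \<in> A then f x else g x"
  have "Pi_pmf E d q = map_pmf ?h (pair_pmf (Pi_pmf A d q) (Pi_pmf (E - A) d q))"
    by (subst E, rule Pi_pmf_union) (use fin finA in auto)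
  hence "measure_pmf.prob (Pi_pmf E d q) {f. P f \<and> Q f} =
     measure_pmf.prob (pair_pmf (Pi_pmf A d q) (Pi_pmf (E - A) d q)) (?h -` {f. P f \<and> Q f})"
    by simp
  also have "?h -` {f. P f \<and> Q f} = {f. P f} \<times> {g. Q g}"
  proof -
    have "P (?h (f,g)) = P f" for f g by (rule P) auto
    moreover have "Q (?h (f,g)) = Q g" for f g by (rule Q) auto
    ultimately show ?thesis by auto
  qed
  also have "measure_pmf.prob (pair_pmf (Pi_pmf A d q) (Pi_pmf (E - A) d q)) \<dots> =
     measure_pmf.prob (Pi_pmf A d q) {f. P f} * measure_pmf.prob (Pi_pmf (E - A) d q) {f. Q f}"
    by (rule prob_pair_pmf_times)
  finally show ?thesis .
qed
lemma prob_all_true: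
  assumes "finite A" "0 \<le> p" "p \<le> 1"
  shows "measure_pmf.prob (Pi_pmf A False (\<lambda>_. bernoulli_pmf p)) {f. \<forall>x\<in>A. f x} = p ^ card A"
proof -
  have "{f. \<forall>x\<in>A. f x} = Pi A (\<lambda>_. {True})" by (auto simp: Pi_def)
  hence "measure_pmf.prob (Pi_pmf A False (\<lambda>_. bernoulli_pmf p)) {f. \<forall>x\<in>A. f x} =
      (\<Prod>x\<in>A. measure_pmf.prob (bernoulli_pmf p) {True})"
    using measure_Pi_pmf_Pi[OF assms(1), of False "\<lambda>_. bernoulli_pmf p" "\<lambda>_. {True}"] by (simp only:)
  also have "\<dots> = p ^ card A" using assms by (simp add: measure_pmf_single)
  finally show ?thesis .
qed

lemma avoid_prob:
  fixes s I :: "nat set" and E :: "nat set set"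
  assumes "finite E" "finite I" "finite s" "I \<inter> s = {}" "\<forall>i\<in>I. \<forall>j\<in>s. {i,j} \<in> E" "0 \<le> p" "p \<le> 1"
  shows "measure_pmf.prob (Pi_pmf E False (\<lambda>_. bernoulli_pmf p)) {G. \<forall>i\<in>I. \<not>(\<forall>j\<in>s. G {i,j})}
          = (1 - p ^ card s) ^ card I"
  using assms(2,1,4,5)
proof (induction I arbitrary: E rule: finite_induct)
  case empty
  then show ?case by simp
next
  case (insert i I)
  define A where "A = (\<lambda>j. {i,j}) ` s"
  have AE: "A \<subseteq> E" using insert.prems by (auto simp: A_def)
  have iS: "i \<notin> s" using insert.prems by auto
  have inj: "inj_on (\<lambda>j. {i,j}) s" using iS by (auto simp: inj_on_def doubleton_eq_iff)
  have cA: "card A = card s" unfolding A_def using card_image[OF inj] .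
  have fA: "finite A" using assms(3) by (simp add: A_def)
  have notA: "{i',j} \<notin> A" if "i' \<in> I" "j \<in> s" for i' j
    using that insert.hyps insert.prems by (auto simp: A_def doubleton_eq_iff)
  have eq: "{G. \<forall>i'\<in>insert i I. \<not>(\<forall>j\<in>s. G {i',j})} =
     {G. \<not>(\<forall>j\<in>s. G {i,j}) \<and> (\<forall>i'\<in>I. \<not>(\<forall>j\<in>s. G {i',j}))}" by auto
  have "measure_pmf.prob (Pi_pmf E False (\<lambda>_. bernoulli_pmf p)) {G. \<not>(\<forall>j\<in>s. G {i,j}) \<and> (\<forall>i'\<in>I. \<not>(\<forall>j\<in>s. G {i',j}))}
     = measure_pmf.prob (Pi_pmf A False (\<lambda>_. bernoulli_pmf p)) {G. \<not>(\<forall>j\<in>s. G {i,j})} *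
       measure_pmf.prob (Pi_pmf (E - A) False (\<lambda>_. bernoulli_pmf p)) {G. (\<forall>i'\<in>I. \<not>(\<forall>j\<in>s. G {i',j}))}"
  proof (rule indep_split[OF insert.prems(1) AE])
    fix f g :: "nat set \<Rightarrow> bool" assume "\<And>x::nat set. x \<in> A \<Longrightarrow> f x = g x"
    then show "(\<not>(\<forall>j\<in>s. f {i,j})) = (\<not>(\<forall>j\<in>s. g {i,j}))" by (auto simp: A_def)
  next
    fix f g :: "nat set \<Rightarrow> bool" assume h: "\<And>x::nat set. x \<in> E - A \<Longrightarrow> f x = g x"
    have "f {i',j} = g {i',j}" if "i' \<in> I" "j \<in> s" for i' j
      using h[of "{i',j}"] notA[OF that] insert.prems(3) that by auto
    then show "(\<forall>i'\<in>I. \<not>(\<forall>j\<in>s. f {i',j})) = (\<forall>i'\<in>I. \<not>(\<forall>j\<in>s. g {i',j}))" by auto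
  qed
  also have "measure_pmf.prob (Pi_pmf (E - A) False (\<lambda>_. bernoulli_pmf p)) {G. (\<forall>i'\<in>I. \<not>(\<forall>j\<in>s. G {i',j}))}
      = (1 - p ^ card s) ^ card I"
    by (rule insert.IH) (use insert.prems notA in auto)
  also have "{G. \<not>(\<forall>j\<in>s. G {i,j})} = UNIV - {G. \<forall>x\<in>A. G x}" by (auto simp: A_def)
  also have "measure_pmf.prob (Pi_pmf A False (\<lambda>_. bernoulli_pmf p)) (UNIV - {G. \<forall>x\<in>A. G x}) = 1 - p ^ card s"
    using measure_pmf.prob_compl[of "{G. \<forall>x\<in>A. G x}" "Pi_pmf A False (\<lambda>_. bernoulli_pmf p)"]
      prob_all_true[OF fA assms(6,7)] cA by simp
  finally show ?case using eq insert.hyps by simp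
qed
lemma asym:
  fixes K :: "nat \<Rightarrow> int" and q :: real and k :: nat
  assumes q: "0 < q" "q < 1"
    and lim: "\<exists>\<epsilon>>0. filterlim (\<lambda>n. real_of_int (K n) / (ln (real n)) powr (1 + \<epsilon>)) at_top sequentially"
  shows "(\<lambda>n. real n ^ (k+1) * (1 - q) ^ nat (K n)) \<longlonglongrightarrow> 0"
proof -
  obtain \<epsilon> where e: "\<epsilon> > 0" and f: "filterlim (\<lambda>n. real_of_int (K n) / (ln (real n)) powr (1 + \<epsilon>)) at_top sequentially"
    using lim by blast
  define a where "a = - ln (1 - q)"
  have a: "a > 0" using q by (simp add: a_def)
  have ev1: "eventually (\<lambda>n. real_of_int (K n) / (ln (real n)) powr (1 + \<epsilon>) \<ge> (k+2)/a) sequentially"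
    using f by (simp add: filterlim_at_top)
  have ev2: "eventually (\<lambda>n::nat. n \<ge> 3) sequentially" by (rule eventually_ge_at_top)
  have up: "eventually (\<lambda>n. real n ^ (k+1) * (1 - q) ^ nat (K n) \<le> inverse (real n)) sequentially"
    using ev1 ev2
  proof eventually_elim
    case (elim n)
    define L where "L = ln (real n)"
    have "exp 1 \<le> real n" using exp_le elim(2) by linarith
    hence L1: "L \<ge> 1" unfolding L_def using ln_exp ln_le_cancel_iff
      by (metis exp_gt_zero order_less_le_trans)
    have "L powr (1 + \<epsilon>) \<ge> L powr 1" using L1 e by (intro powr_mono) auto
    hence Lp: "L powr (1 + \<epsilon>) \<ge> L" using L1 by simp
    have Lpos: "L powr (1 + \<epsilon>) > 0" using L1 by simp
    have "real_of_int (K n) \<ge> (k+2)/a * L powr (1 + \<epsilon>)"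
      using elim(1) Lpos unfolding L_def by (simp add: pos_le_divide_eq)
    moreover have "(k+2)/a * L powr (1 + \<epsilon>) \<ge> (k+2)/a * L"
      using Lp a by (intro mult_left_mono) auto
    ultimately have KL: "real_of_int (K n) \<ge> (k+2)/a * L" by linarith
    hence Kpos: "K n \<ge> 0" using a L1
      by (smt (verit, ccfv_SIG) divide_nonneg_pos of_int_0_le_iff of_nat_0_le_iff zero_le_mult_iff)
    have aK: "a * real_of_int (K n) \<ge> (k+2) * L" using KL a by (simp add: field_simps)
    have n0: "real n > 0" using elim(2) by simp
    have "real n ^ (k+1) = exp (real (k+1) * L)"
    proof -
      have "exp (real (k+1) * L) = exp L ^ (k+1)" by (rule exp_of_nat_mult)
      also have "exp L = real n" unfolding L_def using n0 by simp
      finally show ?thesis by simp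
    qed
    moreover have "(1 - q) ^ nat (K n) = exp (- (a * real_of_int (K n)))"
    proof -
      have "(1 - q) ^ nat (K n) = exp (ln (1-q)) ^ nat (K n)" using q by simp
      also have "\<dots> = exp (real (nat (K n)) * ln (1-q))" by (simp add: exp_of_nat_mult)
      also have "real (nat (K n)) = real_of_int (K n)" using Kpos by simp
      finally show ?thesis by (simp add: a_def)
    qed
    ultimately have "real n ^ (k+1) * (1 - q) ^ nat (K n) = exp (real (k+1) * L - a * real_of_int (K n))"
      by (simp add: exp_diff exp_minus field_simps)
    also have "\<dots> \<le> exp (- L)"
    proof -
      have "real (k+1) * L - a * real_of_int (K n) \<le> - L" using aK by (simp add: ring_distribs)
      thus ?thesis by simp
    qed
    also have "exp (- L) = inverse (real n)" unfolding L_def using n0 by (simp add: exp_minus)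
    finally show ?case .
  qed
  have lo: "eventually (\<lambda>n. 0 \<le> real n ^ (k+1) * (1 - q) ^ nat (K n)) sequentially"
    using q by simp
  have li: "(\<lambda>n. inverse (real n)) \<longlonglongrightarrow> 0"
    by (rule tendsto_inverse_0_at_top[OF filterlim_real_sequentially])
  show ?thesis by (rule tendsto_sandwich[OF lo up tendsto_const li])
qed
lemma finite_C: "finite (C n m)"
  by (rule finite_subset[of _ "Pow {1..n}"]) (auto simp: C_def)

lemma finite_edges: "finite (edges_Kn n)"
  by (rule finite_subset[of _ "Pow {1..n}"]) (auto simp: edges_Kn_def)

lemma crit_zero:
  assumes "i \<in> {1..<Min s}" "\<forall>j\<in>s. G {i,j}" "finite s"
  shows "crit_term G s = 0"
proof -
  have Y1: "Y G i j = 1" if "j \<in> s" for j using assms(2) that by (simp add: Y_def)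
  have a: "(\<Prod>j\<in>s. Y G i j) = 1" using Y1 by simp
  have b: "(\<Prod>j\<in>s - {Min s}. Y G i j) = 1" using Y1 by simp
  have z1: "(\<Prod>i\<in>{1..<Min s}. (1 - (\<Prod>j\<in>s. Y G i j))) = 0"
    using assms(1) a by (intro prod_zero) auto
  have z2: "(\<Prod>i\<in>{1..<Min s}. (1 - (\<Prod>j\<in>s - {Min s}. Y G i j))) = 0"
    using assms(1) b by (intro prod_zero) auto
  show ?thesis unfolding crit_term_def z1 z2 by simp
qed

theorem proposition4p5:
  fixes k :: nat and p :: real and K :: "nat \<Rightarrow> int"
  assumes "k \<ge> 1" and "0 < p" and "p < 1"
    and "\<And>n. K n \<le> int n - int k"
    and "\<exists>\<epsilon>>0. filterlim (\<lambda>n. real_of_int (K n) / (ln (real n)) powr (1 + \<epsilon>)) at_top sequentially"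
  shows "(\<lambda>n. measure_pmf.prob (Gnp n p) {G. T n k G - TK n k (K n) G \<noteq> 0}) \<longlonglongrightarrow> 0"
proof -
  define q where "q = p ^ (k+1)"
  have q: "0 < q" "q < 1" using assms(2,3) power_strict_mono[of p 1 "k+1"] unfolding q_def by auto
  define S where "S n = {s\<in>C n (k+1). \<not> int (Min s) \<le> K n}" for n
  define B where "B s = {G. \<forall>i\<in>{1..<Min s}. \<not>(\<forall>j\<in>s. G {i,j})}" for s :: "nat set"
  have diff: "T n k G - TK n k (K n) G = (\<Sum>s\<in>S n. crit_term G s)" for n G
  proof -
    have "T n k G = (\<Sum>s\<in>C n (k+1) \<inter> {s. int (Min s) \<le> K n}. crit_term G s) +
                    (\<Sum>s\<in>C n (k+1) - {s. int (Min s) \<le> K n}. crit_term G s)"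
      unfolding T_def by (rule sum.Int_Diff[OF finite_C])
    moreover have "C n (k+1) \<inter> {s. int (Min s) \<le> K n} = {s\<in>C n (k+1). int (Min s) \<le> K n}" by auto
    moreover have "C n (k+1) - {s. int (Min s) \<le> K n} = S n" by (auto simp: S_def)
    ultimately show ?thesis by (simp add: TK_def)
  qed
  have sub: "{G. T n k G - TK n k (K n) G \<noteq> 0} \<subseteq> (\<Union>s\<in>S n. B s)" for n
  proof
    fix G assume "G \<in> {G. T n k G - TK n k (K n) G \<noteq> 0}"
    hence "(\<Sum>s\<in>S n. crit_term G s) \<noteq> 0" using diff by simp
    then obtain s where s: "s \<in> S n" "crit_term G s \<noteq> 0" by (meson sum.neutral)
    have "card s = k+1" using s(1) by (simp add: S_def C_def)
    hence "finite s" by (metis add_is_0 card.infinite zero_neq_one)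
    hence "G \<in> B s" using crit_zero s(2) unfolding B_def by blast
    thus "G \<in> (\<Union>s\<in>S n. B s)" using s(1) by blast
  qed
  have finS: "finite (S n)" for n by (rule finite_subset[OF _ finite_C]) (auto simp: S_def)
  have pB: "measure_pmf.prob (Gnp n p) (B s) = (1 - q) ^ (Min s - 1)" if s: "s \<in> S n" for n s
  proof -
    have cs: "card s = k+1" and ss: "s \<subseteq> {1..n}" using s by (auto simp: S_def C_def)
    have fs: "finite s" using cs by (metis add_is_0 card.infinite zero_neq_one)
    have "measure_pmf.prob (Pi_pmf (edges_Kn n) False (\<lambda>_. bernoulli_pmf p)) {G. \<forall>i\<in>{1..<Min s}. \<not>(\<forall>j\<in>s. G {i,j})}
        = (1 - p ^ card s) ^ card {1..<Min s}"
    proof (rule avoid_prob[OF finite_edges])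
      show "{1..<Min s} \<inter> s = {}"
      proof -
        { fix x assume x1: "x \<in> {1..<Min s}" and x2: "x \<in> s"
          have "Min s \<le> x" using fs x2 by simp
          with x1 have False by simp }
        thus ?thesis by blast
      qed
      show "\<forall>i\<in>{1..<Min s}. \<forall>j\<in>s. {i, j} \<in> edges_Kn n"
      proof (intro ballI)
        fix i j assume i: "i \<in> {1..<Min s}" and j: "j \<in> s"
        have mj: "Min s \<le> j" using fs j by simp
        have j1: "j \<in> {1..n}" using j ss by blast
        have i1: "i \<in> {1..n}" using i mj j1 by simp
        have ij: "i \<noteq> j" using i mj by simp
        show "{i, j} \<in> edges_Kn n" using i1 j1 ij unfolding edges_Kn_def by blast
      qed
    qed (use fs assms(2,3) in auto)
    thus ?thesis by (simp add: Gnp_def B_def cs q_def)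
  qed
  have bound: "measure_pmf.prob (Gnp n p) {G. T n k G - TK n k (K n) G \<noteq> 0} \<le> real n ^ (k+1) * (1 - q) ^ nat (K n)" for n
  proof -
    have "measure_pmf.prob (Gnp n p) {G. T n k G - TK n k (K n) G \<noteq> 0} \<le> measure_pmf.prob (Gnp n p) (\<Union>s\<in>S n. B s)"
      by (rule measure_pmf.finite_measure_mono[OF sub]) simp
    also have "\<dots> \<le> (\<Sum>s\<in>S n. measure_pmf.prob (Gnp n p) (B s))"
      by (rule measure_pmf.finite_measure_subadditive_finite[OF finS]) simp
    also have "\<dots> \<le> (\<Sum>s\<in>S n. (1 - q) ^ nat (K n))"
    proof (rule sum_mono)
      fix s assume s: "s \<in> S n"
      have "nat (K n) \<le> Min s - 1" using s by (auto simp: S_def)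
      hence "(1 - q) ^ (Min s - 1) \<le> (1 - q) ^ nat (K n)" using q by (intro power_decreasing) auto
      thus "measure_pmf.prob (Gnp n p) (B s) \<le> (1 - q) ^ nat (K n)" using pB[OF s] by simp
    qed
    also have "\<dots> = real (card (S n)) * (1 - q) ^ nat (K n)" by simp
    also have "\<dots> \<le> real n ^ (k+1) * (1 - q) ^ nat (K n)"
    proof (rule mult_right_mono)
      have "card (S n) \<le> card (C n (k+1))" by (rule card_mono[OF finite_C]) (auto simp: S_def)
      also have "card (C n (k+1)) = n choose (k+1)" unfolding C_def using n_subsets[of "{1..n}" "k+1"] by simp
      also have "\<dots> \<le> n ^ (k+1)"
      proof (cases "k+1 \<le> n")
        case True thus ?thesis by (rule binomial_le_pow)
      next
        case False hence "n choose (k+1) = 0" using binomial_eq_0[of n "k+1"] by linarith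
        thus ?thesis by (metis le0)
      qed
      finally show "real (card (S n)) \<le> real n ^ (k+1)" by (metis of_nat_le_iff of_nat_power)
    qed (use q in simp)
    finally show ?thesis .
  qed
  show ?thesis
  proof (rule tendsto_sandwich[OF _ _ tendsto_const asym[OF q assms(5)]])
    show "eventually (\<lambda>n. 0 \<le> measure_pmf.prob (Gnp n p) {G. T n k G - TK n k (K n) G \<noteq> 0}) sequentially" by simp
    show "eventually (\<lambda>n. measure_pmf.prob (Gnp n p) {G. T n k G - TK n k (K n) G \<noteq> 0} \<le> real n ^ (k+1) * (1 - q) ^ nat (K n)) sequentially"
      using bound by simp
  qed
qed

end
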